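(* Let $G=(V,E)$ be a finite connected undirected graph with $V=\{1,\dots,n\}$, symmetric nonnegative adjacency matrix $W=W^T$ with every row having a positive entry, $D=\operatorname{diag}(d_1,\dots,d_n)$ with $d_i=\sum_j W_{ij}$, and $P=D^{-1}W$. Let $A=\operatorname{diag}(\alpha_1,\dots,\alpha_n)$ with $\alpha_i\in(0,1)$ for all $i$. For $i\in V$ let $$K_i(A)=\frac{1}{e_i^T[I-AP]^{-1}\underline{1}}.$$ Then for all $i,j\in V$, $$\frac{d_i}{\alpha_i K_i(A)}\,\pi_j(i)=\frac{d_j}{\alpha_j K_j(A)}\,\pi_i(j),$$ where $\pi_j(i)$ denotes the Occupation-time Personalized PageRank of node $j$ with restart distribution $e_i^T$.
   Context: $e_i$ is the $i$th standard basis column vector and $\underline{1}$ the all-ones column vector. For a probability vector $v$ on $V$, consider the Markov chain $(X_t)$ on $V$ with transition matrix $\tilde P=AP+(I-A)\underline{1}v^T$ (at node $i$, with probability $1-\alpha_i$ the walk restarts at a node drawn from $v$, otherwise it moves according to $P$). The Occupation-time Personalized PageRank is $\pi_j(v)=\lim_{t\to\infty}\mathbb P(X_t=j)$, the stationary distribution of $\tilde P$; and $\pi_j(i):=\pi_j(e_i^T)$. *)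

theory Defs
  imports "HOL-Analysis.Analysis"
begin

text \<open>Vertices are the elements of a finite type 'n (playing the role of {1..n}).
  Matrices are real^'n^'n, vectors real^'n.\<close>

definition degree :: "real^'n^'n \<Rightarrow> 'n::finite \<Rightarrow> real" where
  "degree W i = (\<Sum>j\<in>UNIV. W $ i $ j)"

definition degmat :: "real^'n^'n \<Rightarrow> real^'n^'n::finite" where
  "degmat W = (\<chi> i j. if i = j then degree W i else 0)"

definition transmat :: "real^'n^'n \<Rightarrow> real^'n^'n::finite" where
  "transmat W = matrix_inv (degmat W) ** W"

definition diagmat :: "('n \<Rightarrow> real) \<Rightarrow> real^'n^'n::finite" where
  "diagmat a = (\<chi> i j. if i = j then a i else 0)"

definition ones :: "real^'n::finite" where
  "ones = (\<chi> i. 1)"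

definition outer :: "real^'n \<Rightarrow> real^'n \<Rightarrow> real^'n^'n::finite" where
  "outer x y = (\<chi> i j. x $ i * y $ j)"

definition graph_connected :: "real^'n^'n::finite \<Rightarrow> bool" where
  "graph_connected W \<longleftrightarrow> (\<forall>i j. (i, j) \<in> {(k, l). W $ k $ l > 0}\<^sup>*)"

definition restart_mat :: "real^'n^'n \<Rightarrow> ('n \<Rightarrow> real) \<Rightarrow> real^'n \<Rightarrow> real^'n^'n::finite" where
  "restart_mat W \<alpha> v = diagmat \<alpha> ** transmat W + (mat 1 - diagmat \<alpha>) ** outer ones v"

text \<open>Distribution of X_t (row vector) when X_0 is drawn from v.\<close>
primrec distr :: "real^'n^'n \<Rightarrow> real^'n \<Rightarrow> nat \<Rightarrow> real^'n::finite" where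
  "distr M v 0 = v"
| "distr M v (Suc t) = distr M v t v* M"

text \<open>Occupation-time personalized PageRank: \<pi>_j(v) = lim_t P(X_t = j).\<close>
definition pagerank :: "real^'n^'n \<Rightarrow> ('n \<Rightarrow> real) \<Rightarrow> real^'n \<Rightarrow> 'n \<Rightarrow> real" where
  "pagerank W \<alpha> v j = lim (\<lambda>t. distr (restart_mat W \<alpha> v) v t $ j)"

definition Kval :: "real^'n^'n \<Rightarrow> ('n \<Rightarrow> real) \<Rightarrow> 'n::finite \<Rightarrow> real" where
  "Kval W \<alpha> i = 1 / ((matrix_inv (mat 1 - diagmat \<alpha> ** transmat W) *v ones) $ i)"

end

theory Submission
  imports Defs
begin


lemma inv_facts:
  assumes "invertible (A::real^'n^'n)"
  shows "A ** matrix_inv A = mat 1 \<and> matrix_inv A ** A = mat 1"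
  using assms unfolding invertible_def matrix_inv_def by (rule someI_ex)

lemma inv_eq:
  fixes A B :: "real^'n^'n"
  assumes "A ** B = mat 1"
  shows "matrix_inv A = B"
proof -
  have "invertible A" using assms invertible_right_inverse by blast
  then have "matrix_inv A ** A = mat 1" using inv_facts by blast
  have "matrix_inv A = matrix_inv A ** (A ** B)" using assms by simp
  also have "\<dots> = (matrix_inv A ** A) ** B" by (simp add: matrix_mul_assoc)
  also have "\<dots> = B" using \<open>matrix_inv A ** A = mat 1\<close> by simp
  finally show ?thesis .
qed

lemma diag_left: "(diagmat a ** X) $ i $ j = a i * X $ i $ j"
proof -
  have "\<And>k. (if i = k then a i else 0) * X$k$j = (if i = k then a i * X$i$j else 0)" by simp
  then show ?thesis unfolding matrix_matrix_mult_def diagmat_def by simp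
qed

lemma diag_right: "(X ** diagmat a) $ i $ j = X $ i $ j * a j"
proof -
  have "\<And>k. X$i$k * (if k = j then a k else 0) = (if k = j then X$i$j * a j else 0)" by simp
  then show ?thesis unfolding matrix_matrix_mult_def diagmat_def by simp
qed

lemma diag_entry: "diagmat a $ i $ j = (if i = j then a i else 0)"
  unfolding diagmat_def by simp

lemma mat1_diag: "mat 1 = diagmat (\<lambda>_. 1)"
  unfolding mat_def diagmat_def by simp

lemma diag_diff: "diagmat a - diagmat b = diagmat (\<lambda>k. a k - b k)"
  unfolding diagmat_def by (simp add: vec_eq_iff)

lemma diag_diag: "diagmat a ** diagmat b = diagmat (\<lambda>k. a k * b k)"
  by (simp add: vec_eq_iff diag_left diag_entry)

locale prk =
  fixes W :: "real^'n^'n" and \<alpha> :: "'n::finite \<Rightarrow> real"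
  assumes sym: "transpose W = W"
    and nonneg: "\<And>i j. W $ i $ j \<ge> 0"
    and rowpos: "\<And>i. \<exists>j. W $ i $ j > 0"
    and alpha: "\<And>i. 0 < \<alpha> i \<and> \<alpha> i < 1"
begin

abbreviation "d \<equiv> degree W"

lemma dpos: "0 < d k"
proof -
  obtain j where j: "W$k$j > 0" using rowpos by blast
  have "W$k$j \<le> d k" unfolding degree_def by (rule member_le_sum) (auto intro: nonneg)
  with j show ?thesis by simp
qed

lemma Wsym: "W $ j $ k = W $ k $ j"
proof -
  have "transpose W $ j $ k = W $ j $ k" using sym by simp
  then show ?thesis by (simp add: transpose_def)
qed

lemma degmat_inv: "matrix_inv (degmat W) = diagmat (\<lambda>k. 1 / d k)"
proof (rule inv_eq)
  have "degmat W = diagmat d" unfolding degmat_def diagmat_def by simp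
  then show "degmat W ** diagmat (\<lambda>k. 1 / d k) = mat 1"
    using dpos by (simp add: diag_diag mat1_diag less_imp_neq[symmetric])
qed

lemma P_entry: "transmat W $ k $ j = W $ k $ j / d k"
  unfolding transmat_def degmat_inv diag_left by simp

lemma P_row: "(\<Sum>j\<in>UNIV. transmat W $ k $ j) = 1"
  using dpos[of k] by (simp add: P_entry sum_divide_distrib[symmetric] degree_def)

lemma P_nonneg: "transmat W $ k $ j \<ge> 0"
  using dpos[of k] nonneg by (simp add: P_entry)

definition "B = mat 1 - diagmat \<alpha> ** transmat W"

lemma B_entry: "B $ k $ j = (if k = j then 1 else 0) - \<alpha> k * transmat W $ k $ j"
  unfolding B_def by (simp add: diag_left mat_def)

lemma Bv: "(B *v x) $ k = x $ k - \<alpha> k * (\<Sum>j\<in>UNIV. transmat W $ k $ j * x $ j)"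
proof -
  have "\<And>j. B $ k $ j * x $ j = (if k = j then x $ k else 0) - \<alpha> k * (transmat W $ k $ j * x $ j)"
    by (simp add: B_entry left_diff_distrib)
  then have "(\<Sum>j\<in>UNIV. B $ k $ j * x $ j) = (\<Sum>j\<in>UNIV. (if k = j then x $ k else 0) - \<alpha> k * (transmat W $ k $ j * x $ j))"
    by simp
  also have "\<dots> = x $ k - \<alpha> k * (\<Sum>j\<in>UNIV. transmat W $ k $ j * x $ j)"
    by (simp only: sum_subtractf sum_distrib_left[symmetric]) simp
  finally show ?thesis unfolding matrix_vector_mult_def by simp
qed

lemma B_inj: assumes "B *v x = 0" shows "x = 0"
proof -
  let ?m = "Max (range (\<lambda>k. \<bar>x $ k\<bar>))"
  have "?m \<in> range (\<lambda>k. \<bar>x $ k\<bar>)" by (rule Max_in) auto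
  then obtain k where k0: "?m = \<bar>x $ k\<bar>" by (rule rangeE)
  then have k: "\<bar>x $ k\<bar> = ?m" by simp
  have mx: "\<bar>x $ j\<bar> \<le> ?m" for j by (rule Max_ge) auto
  have "x $ k = \<alpha> k * (\<Sum>j\<in>UNIV. transmat W $ k $ j * x $ j)"
    using assms Bv[of x k] by simp
  then have "\<bar>x $ k\<bar> = \<alpha> k * \<bar>\<Sum>j\<in>UNIV. transmat W $ k $ j * x $ j\<bar>"
    using alpha[of k] by (simp add: abs_mult)
  also have "\<bar>\<Sum>j\<in>UNIV. transmat W $ k $ j * x $ j\<bar> \<le> (\<Sum>j\<in>UNIV. transmat W $ k $ j * ?m)"
  proof -
    have "\<bar>\<Sum>j\<in>UNIV. transmat W $ k $ j * x $ j\<bar> \<le> (\<Sum>j\<in>UNIV. \<bar>transmat W $ k $ j * x $ j\<bar>)"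
      by (rule sum_abs)
    also have "\<dots> \<le> (\<Sum>j\<in>UNIV. transmat W $ k $ j * ?m)"
      by (rule sum_mono) (simp add: abs_mult P_nonneg mx mult_left_mono)
    finally show ?thesis .
  qed
  also have "(\<Sum>j\<in>UNIV. transmat W $ k $ j * ?m) = ?m"
    by (simp add: sum_distrib_right[symmetric] P_row)
  finally have "?m \<le> \<alpha> k * ?m" using k alpha[of k] by (simp add: mult_left_mono)
  then have "(1 - \<alpha> k) * ?m \<le> 0" by (simp add: algebra_simps)
  moreover have "?m \<ge> 0" using k by simp
  moreover have "1 - \<alpha> k > 0" using alpha[of k] by simp
  ultimately have "?m \<le> 0" by (simp add: mult_le_0_iff)
  then have "\<bar>x $ j\<bar> \<le> 0" for j using mx[of j] by linarith
  then show ?thesis by (simp add: vec_eq_iff)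
qed

lemma B_inv: "B ** matrix_inv B = mat 1" "matrix_inv B ** B = mat 1"
proof -
  have "\<exists>C. C ** B = mat 1" using B_inj matrix_left_invertible_ker by blast
  then have "invertible B" using invertible_left_inverse by blast
  then show "B ** matrix_inv B = mat 1" "matrix_inv B ** B = mat 1" using inv_facts by blast+
qed

definition "R = matrix_inv B"
definition "N = diagmat (\<lambda>k. \<alpha> k / d k)"

lemma transpose_diag: "transpose (diagmat a) = diagmat a"
  unfolding transpose_def diagmat_def by (simp add: vec_eq_iff)

lemma BN_sym: "transpose (B ** N) = B ** N"
proof -
  have "(B ** N) $ j $ k = (B ** N) $ k $ j" for j k
  proof (cases "j = k")
    case True then show ?thesis by simp
  next
    case False
    then show ?thesis unfolding N_def
      by (simp add: diag_right B_entry P_entry Wsym[of j k] mult_ac)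
  qed
  then show ?thesis unfolding transpose_def by (simp add: vec_eq_iff)
qed

lemma R_sym_entry: "d i / \<alpha> i * R $ i $ j = d j / \<alpha> j * R $ j $ i"
proof -
  have RB: "R ** B = mat 1" "B ** R = mat 1" using B_inv unfolding R_def by auto
  have BN: "B ** N = N ** transpose B"
    using BN_sym by (metis matrix_transpose_mul transpose_diag N_def)
  have "N ** transpose R = R ** (B ** N) ** transpose R"
    using RB by (simp add: matrix_mul_assoc)
  also have "\<dots> = R ** N ** (transpose B ** transpose R)"
    unfolding BN by (simp add: matrix_mul_assoc)
  also have "\<dots> = R ** N"
    by (simp add: matrix_transpose_mul[symmetric] RB transpose_mat)
  finally have E: "N ** transpose R = R ** N" .
  have "(N ** transpose R) $ i $ j = (R ** N) $ i $ j" using E by simp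
  then have "\<alpha> i / d i * R $ j $ i = R $ i $ j * (\<alpha> j / d j)"
    unfolding N_def by (simp add: diag_left diag_right transpose_def)
  moreover have "d i > 0" "d j > 0" "\<alpha> i > 0" "\<alpha> j > 0" using dpos alpha by auto
  ultimately show ?thesis by (simp add: field_simps)
qed

definition "u = R *v ones"

lemma u_pos: "u $ k > 0"
proof -
  have Bu: "B *v u = ones" unfolding u_def R_def
    by (simp add: matrix_vector_mul_assoc B_inv)
  let ?m = "Min (range (\<lambda>k. u $ k))"
  have "?m \<in> range (\<lambda>k. u $ k)" by (rule Min_in) auto
  then obtain l where l0: "?m = u $ l" by (rule rangeE)
  have mn: "?m \<le> u $ j" for j by (rule Min_le) auto
  have e1: "u $ l - \<alpha> l * (\<Sum>j\<in>UNIV. transmat W $ l $ j * u $ j) = 1"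
    using Bv[of u l] Bu by (simp add: ones_def)
  have e2: "(\<Sum>j\<in>UNIV. transmat W $ l $ j * u $ j) \<ge> (\<Sum>j\<in>UNIV. transmat W $ l $ j * ?m)"
    by (rule sum_mono) (simp add: P_nonneg mn mult_left_mono)
  have e3: "(\<Sum>j\<in>UNIV. transmat W $ l $ j * ?m) = ?m"
    by (simp add: sum_distrib_right[symmetric] P_row)
  have "\<alpha> l * ?m \<le> \<alpha> l * (\<Sum>j\<in>UNIV. transmat W $ l $ j * u $ j)"
    using e2 e3 alpha[of l] by (intro mult_left_mono) auto
  then have "u $ l \<ge> 1 + \<alpha> l * ?m" using e1 by linarith
  then have "(1 - \<alpha> l) * ?m \<ge> 1" using l0 by (simp add: algebra_simps)
  then have "0 < (1 - \<alpha> l) * ?m" by linarith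
  moreover have "1 - \<alpha> l > 0" using alpha[of l] by simp
  ultimately have "?m > 0" by (simp add: zero_less_mult_iff)
  then show ?thesis using mn[of k] by simp
qed

lemma u_entry: "u $ i = (\<Sum>j\<in>UNIV. R $ i $ j)"
  unfolding u_def matrix_vector_mult_def ones_def by simp

lemma RB_entry: "R $ i $ j - (\<Sum>k\<in>UNIV. R $ i $ k * (\<alpha> k * transmat W $ k $ j)) = (if i = j then 1 else 0)"
proof -
  have "(R ** B) $ i $ j = (if i = j then 1 else 0)" using B_inv unfolding R_def by (simp add: mat_def)
  moreover have "\<And>k. R $ i $ k * B $ k $ j = (if k = j then R $ i $ j else 0) - R $ i $ k * (\<alpha> k * transmat W $ k $ j)"
    by (simp add: B_entry right_diff_distrib)
  then have "(R ** B) $ i $ j = (\<Sum>k\<in>UNIV. (if k = j then R $ i $ j else 0) - R $ i $ k * (\<alpha> k * transmat W $ k $ j))"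
    unfolding matrix_matrix_mult_def by simp
  then have "(R ** B) $ i $ j = R $ i $ j - (\<Sum>k\<in>UNIV. R $ i $ k * (\<alpha> k * transmat W $ k $ j))"
    by (simp only: sum_subtractf) simp
  ultimately show ?thesis by simp
qed

abbreviation "M i \<equiv> restart_mat W \<alpha> (axis i 1)"

lemma M_entry: "M i $ k $ j = \<alpha> k * transmat W $ k $ j + (1 - \<alpha> k) * (if j = i then 1 else 0)"
proof -
  have "mat 1 - diagmat \<alpha> = diagmat (\<lambda>k. 1 - \<alpha> k)" by (simp add: mat1_diag diag_diff)
  moreover have "outer ones (axis i 1) $ k $ j = (if j = i then 1 else 0)"
    unfolding outer_def ones_def axis_def by simp
  ultimately show ?thesis unfolding restart_mat_def
    by (simp add: diag_left)
qed

lemma M_nonneg: "M i $ k $ j \<ge> 0"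
  using alpha[of k] P_nonneg[of k j] by (simp add: M_entry)

lemma M_row: "(\<Sum>j\<in>UNIV. M i $ k $ j) = 1"
  by (simp add: M_entry sum.distrib sum_distrib_left[symmetric] P_row)

lemma M_col: "M i $ k $ i \<ge> 1 - \<alpha> k"
  using alpha[of k] P_nonneg[of k i] by (simp add: M_entry)

lemma stat:
  assumes "\<And>j. p $ j - (\<Sum>k\<in>UNIV. p $ k * (\<alpha> k * transmat W $ k $ j)) = (if j = i then c else 0)"
  shows "p v* M i = p"
proof -
  have s1: "(\<Sum>k\<in>UNIV. p $ k * \<alpha> k) = (\<Sum>j\<in>UNIV. \<Sum>k\<in>UNIV. p $ k * (\<alpha> k * transmat W $ k $ j))"
  proof -
    have "(\<Sum>k\<in>UNIV. p $ k * \<alpha> k) = (\<Sum>k\<in>UNIV. p $ k * \<alpha> k * (\<Sum>j\<in>UNIV. transmat W $ k $ j))"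
      by (simp add: P_row)
    also have "\<dots> = (\<Sum>k\<in>UNIV. \<Sum>j\<in>UNIV. p $ k * (\<alpha> k * transmat W $ k $ j))"
      by (simp add: sum_distrib_left mult.assoc)
    also have "\<dots> = (\<Sum>j\<in>UNIV. \<Sum>k\<in>UNIV. p $ k * (\<alpha> k * transmat W $ k $ j))"
      by (rule sum.swap)
    finally show ?thesis .
  qed
  have s2: "(\<Sum>j\<in>UNIV. \<Sum>k\<in>UNIV. p $ k * (\<alpha> k * transmat W $ k $ j)) = (\<Sum>j\<in>UNIV. p $ j) - c"
  proof -
    have "(\<Sum>j\<in>UNIV. \<Sum>k\<in>UNIV. p $ k * (\<alpha> k * transmat W $ k $ j)) = (\<Sum>j\<in>UNIV. p $ j - (if j = i then c else 0))"
    proof (rule sum.cong[OF refl])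
      fix j show "(\<Sum>k\<in>UNIV. p $ k * (\<alpha> k * transmat W $ k $ j)) = p $ j - (if j = i then c else 0)"
        using assms[of j] by linarith
    qed
    then show ?thesis by (simp only: sum_subtractf) simp
  qed
  have cc: "(\<Sum>k\<in>UNIV. p $ k * (1 - \<alpha> k)) = c"
  proof -
    have "(\<Sum>k\<in>UNIV. p $ k * (1 - \<alpha> k)) = (\<Sum>k\<in>UNIV. p $ k - p $ k * \<alpha> k)"
      by (simp add: right_diff_distrib)
    also have "\<dots> = (\<Sum>k\<in>UNIV. p $ k) - (\<Sum>k\<in>UNIV. p $ k * \<alpha> k)"
      by (rule sum_subtractf)
    finally show ?thesis using s1 s2 by linarith
  qed
  have "(p v* M i) $ j = p $ j" for j
  proof -
    have "(p v* M i) $ j = (\<Sum>k\<in>UNIV. p $ k * (\<alpha> k * transmat W $ k $ j)) + (if j = i then 1 else 0) * (\<Sum>k\<in>UNIV. p $ k * (1 - \<alpha> k))"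
    proof -
      have "\<And>k. p $ k * M i $ k $ j = p $ k * (\<alpha> k * transmat W $ k $ j) + (if j = i then 1 else 0) * (p $ k * (1 - \<alpha> k))"
        by (simp add: M_entry distrib_left)
      then have "(p v* M i) $ j = (\<Sum>k\<in>UNIV. p $ k * (\<alpha> k * transmat W $ k $ j) + (if j = i then 1 else 0) * (p $ k * (1 - \<alpha> k)))"
        unfolding vector_matrix_mult_def by simp
      also have "\<dots> = (\<Sum>k\<in>UNIV. p $ k * (\<alpha> k * transmat W $ k $ j)) + (if j = i then 1 else 0) * (\<Sum>k\<in>UNIV. p $ k * (1 - \<alpha> k))"
        by (simp only: sum.distrib sum_distrib_left)
      finally show ?thesis .
    qed
    also have "\<dots> = p $ j" using cc assms[of j] by (cases "j = i") simp_all
    finally show ?thesis .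
  qed
  then show ?thesis by (simp add: vec_eq_iff)
qed

definition "pv i = (\<chi> j. R $ i $ j / u $ i)"

lemma pv_stat: "pv i v* M i = pv i"
proof (rule stat[where c = "1 / u $ i"])
  fix j
  have "pv i $ j - (\<Sum>k\<in>UNIV. pv i $ k * (\<alpha> k * transmat W $ k $ j))
      = (R $ i $ j - (\<Sum>k\<in>UNIV. R $ i $ k * (\<alpha> k * transmat W $ k $ j))) / u $ i"
    unfolding pv_def by (simp add: diff_divide_distrib sum_divide_distrib)
  then show "pv i $ j - (\<Sum>k\<in>UNIV. pv i $ k * (\<alpha> k * transmat W $ k $ j)) = (if j = i then 1 / u $ i else 0)"
    using RB_entry[of i j] by auto
qed

lemma pv_sum: "(\<Sum>j\<in>UNIV. pv i $ j) = 1"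
  using u_pos[of i] unfolding pv_def by (simp add: sum_divide_distrib[symmetric] u_entry[symmetric])

definition "cm = Min (range (\<lambda>k. 1 - \<alpha> k))"

lemma cm_props: "0 < cm" "cm < 1" "cm \<le> 1 - \<alpha> k"
proof -
  have "cm \<in> range (\<lambda>k. 1 - \<alpha> k)" unfolding cm_def by (rule Min_in) auto
  then obtain l where "cm = 1 - \<alpha> l" by (rule rangeE)
  then show "0 < cm" "cm < 1" using alpha[of l] by auto
  show "cm \<le> 1 - \<alpha> k" unfolding cm_def by (rule Min_le) auto
qed

lemma sum_pres: "(\<Sum>j\<in>UNIV. (y v* M i) $ j) = (\<Sum>k\<in>UNIV. y $ k)"
proof -
  have "(\<Sum>j\<in>UNIV. (y v* M i) $ j) = (\<Sum>j\<in>UNIV. \<Sum>k\<in>UNIV. y $ k * M i $ k $ j)"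
    unfolding vector_matrix_mult_def by simp
  also have "\<dots> = (\<Sum>k\<in>UNIV. \<Sum>j\<in>UNIV. y $ k * M i $ k $ j)" by (rule sum.swap)
  also have "\<dots> = (\<Sum>k\<in>UNIV. y $ k * (\<Sum>j\<in>UNIV. M i $ k $ j))" by (simp only: sum_distrib_left)
  also have "\<dots> = (\<Sum>k\<in>UNIV. y $ k)" by (simp add: M_row)
  finally show ?thesis .
qed

lemma contract:
  assumes y0: "(\<Sum>k\<in>UNIV. y $ k) = 0"
  shows "(\<Sum>j\<in>UNIV. \<bar>(y v* M i) $ j\<bar>) \<le> (1 - cm) * (\<Sum>k\<in>UNIV. \<bar>y $ k\<bar>)"
proof -
  define Q where "Q k j = M i $ k $ j - (if j = i then cm else 0)" for k j
  have Qnn: "Q k j \<ge> 0" for k j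
    using M_nonneg[of i k j] M_col[of k i] cm_props(3)[of k] unfolding Q_def by auto
  have Qrow: "(\<Sum>j\<in>UNIV. Q k j) = 1 - cm" for k
    unfolding Q_def by (simp only: sum_subtractf M_row) simp
  have ent: "(y v* M i) $ j = (\<Sum>k\<in>UNIV. y $ k * Q k j)" for j
  proof -
    have "\<And>k. y $ k * M i $ k $ j = y $ k * Q k j + (if j = i then cm else 0) * y $ k"
      unfolding Q_def by (simp add: algebra_simps)
    then have "(y v* M i) $ j = (\<Sum>k\<in>UNIV. y $ k * Q k j + (if j = i then cm else 0) * y $ k)"
      unfolding vector_matrix_mult_def by simp
    also have "\<dots> = (\<Sum>k\<in>UNIV. y $ k * Q k j) + (if j = i then cm else 0) * (\<Sum>k\<in>UNIV. y $ k)"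
      by (simp only: sum.distrib sum_distrib_left)
    finally show ?thesis using y0 by simp
  qed
  have "(\<Sum>j\<in>UNIV. \<bar>(y v* M i) $ j\<bar>) \<le> (\<Sum>j\<in>UNIV. \<Sum>k\<in>UNIV. \<bar>y $ k\<bar> * Q k j)"
  proof (rule sum_mono)
    fix j
    have "\<bar>(y v* M i) $ j\<bar> \<le> (\<Sum>k\<in>UNIV. \<bar>y $ k * Q k j\<bar>)" unfolding ent by (rule sum_abs)
    also have "\<dots> = (\<Sum>k\<in>UNIV. \<bar>y $ k\<bar> * Q k j)" using Qnn by (simp add: abs_mult)
    finally show "\<bar>(y v* M i) $ j\<bar> \<le> (\<Sum>k\<in>UNIV. \<bar>y $ k\<bar> * Q k j)" .
  qed
  also have "\<dots> = (\<Sum>k\<in>UNIV. \<Sum>j\<in>UNIV. \<bar>y $ k\<bar> * Q k j)" by (rule sum.swap)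
  also have "\<dots> = (\<Sum>k\<in>UNIV. \<bar>y $ k\<bar> * (1 - cm))" by (simp only: sum_distrib_left[symmetric] Qrow)
  also have "\<dots> = (1 - cm) * (\<Sum>k\<in>UNIV. \<bar>y $ k\<bar>)" by (simp add: sum_distrib_left mult.commute)
  finally show ?thesis .
qed

lemma conv: "(\<lambda>t. distr (M i) (axis i 1) t $ j) \<longlonglongrightarrow> pv i $ j"
proof -
  define x where "x t = distr (M i) (axis i 1) t" for t
  define y where "y t = x t - pv i" for t
  define L where "L t = (\<Sum>k\<in>UNIV. \<bar>y t $ k\<bar>)" for t
  have xs: "(\<Sum>k\<in>UNIV. x t $ k) = 1" for t
  proof (induction t)
    case 0 then show ?case unfolding x_def by (simp add: axis_def)
  next
    case (Suc t) then show ?case unfolding x_def by (simp add: sum_pres)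
  qed
  have ys: "(\<Sum>k\<in>UNIV. y t $ k) = 0" for t
    unfolding y_def using xs[of t] pv_sum[of i] by (simp add: sum_subtractf)
  have ysuc: "y (Suc t) = y t v* M i" for t
    unfolding y_def x_def by (simp add: vector_matrix_mult_diff_distrib pv_stat)
  have Lb: "L t \<le> (1 - cm) ^ t * L 0" for t
  proof (induction t)
    case 0 then show ?case by simp
  next
    case (Suc t)
    have "L (Suc t) \<le> (1 - cm) * L t" unfolding L_def ysuc by (rule contract[OF ys])
    also have "\<dots> \<le> (1 - cm) * ((1 - cm) ^ t * L 0)"
      using Suc cm_props by (intro mult_left_mono) auto
    finally show ?case by simp
  qed
  have "(\<lambda>t. (1 - cm) ^ t) \<longlonglongrightarrow> 0"
    using cm_props by (intro LIMSEQ_power_zero) auto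
  then have g0: "(\<lambda>t. (1 - cm) ^ t * L 0) \<longlonglongrightarrow> 0"
    by (rule tendsto_mult_left_zero)
  have "norm (x t $ j - pv i $ j) \<le> (1 - cm) ^ t * L 0" for t
  proof -
    have "\<bar>y t $ j\<bar> \<le> L t" unfolding L_def by (rule member_le_sum) auto
    then show ?thesis using Lb[of t] unfolding y_def by simp
  qed
  then have "(\<lambda>t. x t $ j - pv i $ j) \<longlonglongrightarrow> 0"
    by (intro Lim_null_comparison[OF _ g0]) auto
  then show ?thesis unfolding x_def by (rule LIM_zero_cancel)
qed

end

theorem theorem2:
  fixes W :: "real^'n^'n" and \<alpha> :: "'n::finite \<Rightarrow> real"
  assumes sym: "transpose W = W"
    and nonneg: "\<And>i j. W $ i $ j \<ge> 0"
    and rowpos: "\<And>i. \<exists>j. W $ i $ j > 0"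
    and conn: "graph_connected W"
    and alpha: "\<And>i. 0 < \<alpha> i \<and> \<alpha> i < 1"
  shows "\<forall>i j. degree W i / (\<alpha> i * Kval W \<alpha> i) * pagerank W \<alpha> (axis i 1) j
             = degree W j / (\<alpha> j * Kval W \<alpha> j) * pagerank W \<alpha> (axis j 1) i"
proof (intro allI)
  fix i j
  interpret prk W \<alpha> using assms by unfold_locales auto
  have pr: "pagerank W \<alpha> (axis a 1) b = R $ a $ b / u $ a" for a b
    unfolding pagerank_def using conv[of a b] by (simp add: limI pv_def)
  have K: "Kval W \<alpha> a = 1 / u $ a" for a
    unfolding Kval_def u_def R_def B_def by simp
  have upos: "u $ a > 0" for a by (rule u_pos)
  have ne: "\<alpha> a \<noteq> 0" for a using alpha[of a] by auto
  have "degree W a / (\<alpha> a * Kval W \<alpha> a) * pagerank W \<alpha> (axis a 1) b = degree W a / \<alpha> a * R $ a $ b" for a b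
    unfolding pr K using upos[of a] ne[of a] by (simp add: field_simps)
  then show "degree W i / (\<alpha> i * Kval W \<alpha> i) * pagerank W \<alpha> (axis i 1) j
             = degree W j / (\<alpha> j * Kval W \<alpha> j) * pagerank W \<alpha> (axis j 1) i"
    using R_sym_entry[of i j] by simp
qed

end
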